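(* For an even integer $n\ge4$ and any integer $1\le k\le\frac{n-2}{2}$, $$\sum_{1\le i\le n/2}e_{2i}\,g_{n-2i,n}\prod_{j=k-i+1}^{\frac{n-2i}{2}}\frac{q^{2j}-1}{q^{2j-2k+2i}-1}=\frac{q^{(n-1)k}-1}{q-1}\prod_{j=k+1}^{n/2}\frac{q^{2j}-1}{q^{2j-2k}-1}.$$
   Context: $e_{2i}$ is the $E$-polynomial (in $q=uv$) of the variety of nondegenerate skew forms on $\mathbb C^{2i}$ up to scaling, i.e. of ${\mathrm{Pf}}^{\circ}(2i,\mathbb C^{2i})=\mathbb P(\wedge^2(\mathbb C^{2i})^{\vee})\setminus\{\text{degenerate forms}\}$. $g_{a,b}=\binom{b}{a}_q=\prod_{j=0}^{a-1}\frac{1-q^{b-j}}{1-q^{j+1}}$ is the $E$-polynomial of the Grassmannian $G(a,b)$. *)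

theory Defs
  imports Complex_Main
begin

text \<open>Gaussian binomial g_{a,b} = prod_{j=0}^{a-1} (1-q^{b-j})/(1-q^{j+1}),
  the E-polynomial of the Grassmannian G(a,b), evaluated at q.\<close>
definition gauss_g :: "complex \<Rightarrow> nat \<Rightarrow> nat \<Rightarrow> complex" where
  "gauss_g q a b = (\<Prod>j<a. (1 - q ^ (b - j)) / (1 - q ^ (j + 1)))"

text \<open>E-polynomial e_{2i} of the variety of nondegenerate skew forms on C^{2i}
  up to scaling (complement of the Pfaffian hypersurface in P(wedge^2)),
  given by its closed form q^{i(i-1)} prod_{j=1}^{i} (q^{2j-1}-1) / (q-1).\<close>
definition skew_e :: "complex \<Rightarrow> nat \<Rightarrow> complex" where
  "skew_e q i = q ^ (i * (i - 1)) * (\<Prod>j=1..i. (q ^ (2 * j - 1) - 1)) / (q - 1)"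

end

theory Submission
  imports Defs
begin

definition PP :: "complex \<Rightarrow> nat \<Rightarrow> complex" where
  "PP Q a = (\<Prod>j=1..a. (Q ^ j - 1))"

definition OD :: "complex \<Rightarrow> nat \<Rightarrow> complex" where
  "OD q a = (\<Prod>j=1..a. (q ^ (2 * j - 1) - 1))"

lemma PP_0 [simp]: "PP Q 0 = 1" by (simp add: PP_def)
lemma PP_Suc: "PP Q (Suc a) = PP Q a * (Q ^ Suc a - 1)"
  by (simp add: PP_def)
lemma OD_0 [simp]: "OD q 0 = 1" by (simp add: OD_def)
lemma OD_Suc: "OD q (Suc a) = OD q a * (q ^ (2 * a + 1) - 1)"
  by (simp add: OD_def)

lemma PP_nz: assumes "\<forall>m::nat. m > 0 \<longrightarrow> Q ^ m \<noteq> 1" shows "PP Q a \<noteq> 0"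
  using assms by (induction a) (auto simp: PP_Suc)

lemma OD_nz: assumes "\<forall>m::nat. m > 0 \<longrightarrow> q ^ m \<noteq> 1" shows "OD q a \<noteq> 0"
  using assms by (induction a) (auto simp: OD_Suc)

lemma sq_nontriv: assumes "\<forall>m::nat. m > 0 \<longrightarrow> (q::complex) ^ m \<noteq> 1" shows "\<forall>m::nat. m > 0 \<longrightarrow> (q^2) ^ m \<noteq> 1"
proof (intro allI impI notI)
  fix m :: nat assume "m > 0" "(q^2)^m = 1"
  have "q ^ (2*m) = (q^2)^m" by (rule power_mult)
  then have e: "q ^ (2*m) = 1" using \<open>(q^2)^m = 1\<close> by simp
  have "2*m > 0" using \<open>m > 0\<close> by simp
  then show False using assms e by blast
qed

lemma PP_double: "PP q (2 * a) = PP (q^2) a * OD q a"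
proof (induction a)
  case 0 then show ?case by simp
next
  case (Suc a)
  have "PP q (2 * Suc a) = PP q (2 * a) * (q ^ (2*a+1) - 1) * (q ^ (2*a+2) - 1)"
    by (simp add: PP_Suc)
  also have "\<dots> = PP (q^2) a * OD q a * (q ^ (2*a+1) - 1) * ((q^2) ^ Suc a - 1)"
  proof -
    have "(q^2)^Suc a = q^(2*a+2)" by (simp only: power_mult[symmetric]) simp
    then show ?thesis using Suc by simp
  qed
  also have "\<dots> = PP (q^2) (Suc a) * OD q (Suc a)"
    by (simp add: PP_Suc OD_Suc)
  finally show ?case .
qed

lemma PP_add: "PP Q (d + r) = PP Q d * (\<Prod>t=1..r. (Q ^ (t + d) - 1))"
proof (induction r)
  case 0 then show ?case by simp
next
  case (Suc r)
  then show ?case by (simp add: PP_Suc add.commute)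
qed

lemma swap_div: "(1 - a) / (1 - b) = (a - 1) / (b - (1::complex))"
  by (metis minus_diff_eq minus_divide_divide)

lemma gauss_PP:
  assumes nt: "\<forall>m::nat. m > 0 \<longrightarrow> q ^ m \<noteq> 1" and "a \<le> b"
  shows "gauss_g q a b = PP q b / (PP q a * PP q (b - a))"
proof -
  have g: "gauss_g q a b = (\<Prod>j<a. (q ^ (b - j) - 1) / (q ^ (j + 1) - 1))"
    unfolding gauss_g_def
    by (rule prod.cong) (simp_all add: swap_div)
  have "(\<Prod>j<a. (q ^ (b - j) - 1) / (q ^ (j + 1) - 1)) = PP q b / (PP q a * PP q (b - a))"
    using \<open>a \<le> b\<close>
  proof (induction a)
    case 0 then show ?case using PP_nz[OF nt] by simp
  next
    case (Suc a)
    have e: "PP q (b - a) = PP q (b - Suc a) * (q ^ (b - a) - 1)"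
      using Suc.prems PP_Suc[of q "b - Suc a"] by (simp add: Suc_diff_Suc)
    have n1: "q ^ (b - a) - 1 \<noteq> 0" "q ^ (a + 1) - 1 \<noteq> 0" using nt Suc.prems by auto
    have n2: "PP q a \<noteq> 0" "PP q (b - Suc a) \<noteq> 0" "PP q b \<noteq> 0" using PP_nz[OF nt] by auto
    show ?case using Suc n1 n2 by (simp add: e PP_Suc field_simps)
  qed
  then show ?thesis using g by simp
qed

fun qbin :: "complex \<Rightarrow> nat \<Rightarrow> nat \<Rightarrow> complex" where
  "qbin Q k 0 = 1"
| "qbin Q 0 (Suc i) = 0"
| "qbin Q (Suc k) (Suc i) = qbin Q k i + Q ^ Suc i * qbin Q k (Suc i)"

lemma qbin_zero: "k < i \<Longrightarrow> qbin Q k i = 0"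
  by (induction Q k i rule: qbin.induct) auto

lemma qbin_PP: "i \<le> k \<Longrightarrow> qbin Q k i * PP Q i * PP Q (k - i) = PP Q k"
proof (induction k arbitrary: i)
  case 0 then show ?case by simp
next
  case (Suc k)
  show ?case
  proof (cases i)
    case 0 then show ?thesis by simp
  next
    case (Suc j)
    show ?thesis
    proof (cases "j = k")
      case True
      have "qbin Q k k * PP Q k = PP Q k" using Suc.IH[of k] by simp
      then show ?thesis using Suc True by (auto simp add: qbin_zero PP_Suc)
    next
      case False
      then have jk: "j < k" using Suc Suc.prems by simp
      have e: "PP Q (k - j) = PP Q (k - Suc j) * (Q ^ (k - j) - 1)"
        using jk PP_Suc[of Q "k - Suc j"] by (simp add: Suc_diff_Suc)
      have h1: "qbin Q k j * PP Q j * PP Q (k - j) = PP Q k" using Suc.IH[of j] jk by simp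
      have h2: "qbin Q k (Suc j) * PP Q (Suc j) * PP Q (k - Suc j) = PP Q k" using Suc.IH[of "Suc j"] jk by simp
      have "qbin Q (Suc k) i * PP Q i * PP Q (Suc k - i)
          = (qbin Q k j + Q ^ Suc j * qbin Q k (Suc j)) * PP Q (Suc j) * PP Q (k - j)"
        using Suc by simp
      also have "\<dots> = (qbin Q k j * PP Q j * PP Q (k - j)) * (Q ^ Suc j - 1)
          + Q ^ Suc j * (qbin Q k (Suc j) * PP Q (Suc j) * PP Q (k - Suc j)) * (Q ^ (k - j) - 1)"
        by (simp add: e PP_Suc algebra_simps)
      also have "\<dots> = PP Q k * (Q ^ Suc j - 1 + Q ^ Suc j * (Q ^ (k - j) - 1))"
        using h1 h2 by (simp add: algebra_simps)
      also have "\<dots> = PP Q (Suc k)"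
      proof -
        have ex: "Suc j + (k - j) = Suc k" using jk by simp
        have "Q ^ Suc j * Q ^ (k - j) = Q ^ Suc k"
          unfolding ex[symmetric] power_add by simp
        then show ?thesis by (simp add: PP_Suc algebra_simps) blast
      qed
      finally show ?thesis .
    qed
  qed
qed

lemma qnewton: "x ^ k = (\<Sum>i\<le>k. qbin Q k i * (\<Prod>l<i. (x - Q ^ l)))"
proof (induction k)
  case 0 then show ?case by simp
next
  case (Suc k)
  define ff where "ff i = (\<Prod>l<i. (x - Q ^ l))" for i
  have ffS: "ff (Suc i) = ff i * (x - Q ^ i)" for i by (simp add: ff_def)
  have ff0: "ff 0 = 1" by (simp add: ff_def)
  have "(\<Sum>i\<le>Suc k. qbin Q (Suc k) i * ff i) =
        ff 0 + (\<Sum>i\<le>k. qbin Q k i * ff (Suc i)) + (\<Sum>i\<le>k. Q ^ Suc i * qbin Q k (Suc i) * ff (Suc i))"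
    by (simp only: sum.atMost_Suc_shift qbin.simps distrib_right sum.distrib ff0) simp
  also have "(\<Sum>i\<le>k. Q ^ Suc i * qbin Q k (Suc i) * ff (Suc i)) =
      (\<Sum>i\<le>Suc k. Q ^ i * qbin Q k i * ff i) - ff 0"
    by (subst sum.atMost_Suc_shift) (simp add: ff0)
  also have "(\<Sum>i\<le>Suc k. Q ^ i * qbin Q k i * ff i) = (\<Sum>i\<le>k. Q ^ i * qbin Q k i * ff i)"
    by (simp add: qbin_zero)
  finally have "(\<Sum>i\<le>Suc k. qbin Q (Suc k) i * ff i) = (\<Sum>i\<le>k. qbin Q k i * (ff (Suc i) + Q ^ i * ff i))"
    by (simp add: sum.distrib algebra_simps)
  also have "\<dots> = x * (\<Sum>i\<le>k. qbin Q k i * ff i)"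
    by (simp add: ffS sum_distrib_left algebra_simps)
  finally show ?case using Suc by (simp add: ff_def)
qed

lemma ff_OO: "i \<le> m \<Longrightarrow> (\<Prod>l<i. (q ^ (2*m-1) - (q^2) ^ l)) * OD q (m - i) = q ^ (i * (i - 1)) * OD q m"
proof (induction i)
  case 0 then show ?case by simp
next
  case (Suc i)
  have e: "OD q (m - i) = OD q (m - Suc i) * (q ^ (2 * (m - Suc i) + 1) - 1)"
    using Suc.prems OD_Suc[of q "m - Suc i"] by (simp add: Suc_diff_Suc)
  have ex: "2*i + (2 * (m - Suc i) + 1) = 2*m-1" using Suc.prems by arith
  have p: "(q^2)^i * q ^ (2 * (m - Suc i) + 1) = q ^ (2*m-1)"
    unfolding ex[symmetric] power_add by (simp add: power_mult[symmetric])
  have ex2: "Suc i * (Suc i - 1) = i * (i - 1) + 2 * i" by (cases i) (simp_all add: algebra_simps)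
  have p2: "q ^ (Suc i * (Suc i - 1)) = q ^ (i * (i - 1)) * (q^2)^i"
    unfolding ex2 power_add by (simp add: power_mult)
  have "(\<Prod>l<Suc i. (q ^ (2*m-1) - (q^2) ^ l)) * OD q (m - Suc i)
     = (\<Prod>l<i. (q ^ (2*m-1) - (q^2) ^ l)) * OD q (m - Suc i) * (q ^ (2*m-1) - (q^2) ^ i)" by simp
  also have "q ^ (2*m-1) - (q^2) ^ i = (q^2)^i * (q ^ (2 * (m - Suc i) + 1) - 1)"
    using p by (simp add: algebra_simps)
  also have "(\<Prod>l<i. (q ^ (2*m-1) - (q^2) ^ l)) * OD q (m - Suc i) * ((q^2)^i * (q ^ (2 * (m - Suc i) + 1) - 1))
     = ((\<Prod>l<i. (q ^ (2*m-1) - (q^2) ^ l)) * OD q (m - i)) * (q^2)^i"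
    by (simp add: e algebra_simps)
  also have "\<dots> = q ^ (Suc i * (Suc i - 1)) * OD q m"
  proof -
    have ih: "(\<Prod>l<i. (q ^ (2*m-1) - (q^2) ^ l)) * OD q (m - i) = q ^ (i * (i - 1)) * OD q m"
      using Suc.IH Suc.prems by simp
    show ?thesis unfolding ih p2 by (simp add: mult_ac)
  qed
  finally show ?case .
qed


lemma int_prod:
  assumes nt: "\<forall>m::nat. m > 0 \<longrightarrow> q ^ m \<noteq> 1" and "1 \<le> i" "i \<le> k" "k < m"
  shows "(\<Prod>j\<in>{int k - int i + 1 .. int (m - i)}.
     (q powi (2 * j) - 1) / (q powi (2 * j - 2 * int k + 2 * int i) - 1))
   = PP (q^2) (m - i) / (PP (q^2) (k - i) * PP (q^2) (m - k))"
proof -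
  define d where "d = k - i"
  define r where "r = m - k"
  define f where "f = (\<lambda>j::int. (q powi (2 * j) - 1) / (q powi (2 * j - 2 * int k + 2 * int i) - 1))"
  have X: "(\<Prod>j\<in>{int k - int i + 1 .. int (m - i)}.
     (q powi (2 * j) - 1) / (q powi (2 * j - 2 * int k + 2 * int i) - 1)) = (\<Prod>j\<in>{int k - int i + 1 .. int (m - i)}. f j)"
    unfolding f_def by (rule refl)
  have S: "{int k - int i + 1 .. int (m - i)} = int ` {1 + d .. r + d}"
    using assms by (simp add: image_int_atLeastAtMost d_def r_def of_nat_diff)
  have "(\<Prod>j\<in>{int k - int i + 1 .. int (m - i)}. f j) = (\<Prod>j\<in>{1 + d .. r + d}. f (int j))"
    unfolding S by (subst prod.reindex) auto
  also have "\<dots> = (\<Prod>t\<in>{1..r}. f (int (t + d)))"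
    by (rule prod.shift_bounds_cl_nat_ivl)
  also have "\<dots> = (\<Prod>t\<in>{1..r}. ((q^2) ^ (t + d) - 1) / ((q^2) ^ t - 1))"
  proof (rule prod.cong)
    fix t assume "t \<in> {1..r}"
    have e1: "2 * int (t + d) = int (2 * (t + d))" by simp
    have e2: "2 * int (t + d) - 2 * int k + 2 * int i = int (2 * t)"
      using assms by (simp add: d_def of_nat_diff)
    have e1': "q powi (2 * int (t + d)) = (q^2) ^ (t + d)"
      unfolding e1 power_int_of_nat by (simp only: power_mult)
    have e2': "q powi (2 * int (t + d) - 2 * int k + 2 * int i) = (q^2) ^ t"
      unfolding e2 power_int_of_nat by (simp only: power_mult)
    show "f (int (t + d)) = ((q^2) ^ (t + d) - 1) / ((q^2) ^ t - 1)"
      unfolding f_def e1' e2' by (rule refl)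
  qed simp
  also have "\<dots> = (\<Prod>t\<in>{1..r}. ((q^2) ^ (t + d) - 1)) / PP (q^2) r"
    by (simp add: prod_dividef PP_def)
  also have "(\<Prod>t\<in>{1..r}. ((q^2) ^ (t + d) - 1)) = PP (q^2) (d + r) / PP (q^2) d"
    using PP_add[of "q^2" d r] PP_nz[OF sq_nontriv[OF nt]] by simp
  also have "d + r = m - i" using assms by (simp add: d_def r_def)
  finally show ?thesis unfolding X d_def r_def by simp
qed

lemma rhs_prod:
  assumes nt: "\<forall>m::nat. m > 0 \<longrightarrow> q ^ m \<noteq> 1" and "k \<le> m"
  shows "(\<Prod>j=k+1..m. (q ^ (2 * j) - 1) / (q ^ (2 * j - 2 * k) - 1))
     = PP (q^2) m / (PP (q^2) k * PP (q^2) (m - k))"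
proof -
  define r where "r = m - k"
  have "(\<Prod>j=k+1..m. (q ^ (2 * j) - 1) / (q ^ (2 * j - 2 * k) - 1))
      = (\<Prod>j=1+k..r+k. (q ^ (2 * j) - 1) / (q ^ (2 * j - 2 * k) - 1))"
  proof -
    have eq: "{k+1..m} = {1+k..r+k}" using assms by (simp add: r_def)
    show ?thesis by (simp only: eq)
  qed
  also have "\<dots> = (\<Prod>t=1..r. (q ^ (2 * (t + k)) - 1) / (q ^ (2 * (t + k) - 2 * k) - 1))"
    by (rule prod.shift_bounds_cl_nat_ivl)
  also have "\<dots> = (\<Prod>t=1..r. ((q^2) ^ (t + k) - 1) / ((q^2) ^ t - 1))"
  proof (rule prod.cong)
    fix t assume "t \<in> {1..r}"
    have a: "q ^ (2 * (t + k)) = (q^2)^(t+k)" by (rule power_mult)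
    have ex: "2 * (t + k) - 2 * k = 2 * t" by simp
    have b: "q ^ (2 * (t + k) - 2 * k) = (q^2)^t" unfolding ex by (rule power_mult)
    show "(q ^ (2 * (t + k)) - 1) / (q ^ (2 * (t + k) - 2 * k) - 1) = ((q^2) ^ (t + k) - 1) / ((q^2) ^ t - 1)"
      unfolding a b by (rule refl)
  qed simp
  also have "\<dots> = (\<Prod>t\<in>{1..r}. ((q^2) ^ (t + k) - 1)) / PP (q^2) r"
    by (simp add: prod_dividef PP_def)
  also have "(\<Prod>t\<in>{1..r}. ((q^2) ^ (t + k) - 1)) = PP (q^2) (k + r) / PP (q^2) k"
    using PP_add[of "q^2" k r] PP_nz[OF sq_nontriv[OF nt]] by simp
  also have "k + r = m" using assms by (simp add: r_def)
  finally show ?thesis unfolding r_def by (metis divide_divide_eq_left)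
qed


theorem mainTheorem5:
  fixes n k :: nat and q :: complex
  assumes "even n" and "n \<ge> 4" and "1 \<le> k" and "k \<le> (n - 2) div 2"
    and "\<forall>m::nat. m > 0 \<longrightarrow> q ^ m \<noteq> 1"
  shows "(\<Sum>i=1..n div 2. skew_e q i * gauss_g q (n - 2 * i) n *
            (\<Prod>j\<in>{int k - int i + 1 .. int ((n - 2 * i) div 2)}.
               (q powi (2 * j) - 1) / (q powi (2 * j - 2 * int k + 2 * int i) - 1)))
         = (q ^ ((n - 1) * k) - 1) / (q - 1) *
           (\<Prod>j=k+1..n div 2. (q ^ (2 * j) - 1) / (q ^ (2 * j - 2 * k) - 1))"
proof -
  note nt = assms(5)
  define m where "m = n div 2"
  have n2: "n = 2 * m" using assms(1) by (simp add: m_def)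
  have km: "k < m" using assms(2-4) n2 by simp
  define Q where "Q = q^2"
  define x where "x = q ^ (2 * m - 1)"
  have ntQ: "\<forall>m::nat. m > 0 \<longrightarrow> Q ^ m \<noteq> 1" using sq_nontriv[OF nt] by (simp add: Q_def)
  have PPQnz: "PP Q a \<noteq> 0" for a using PP_nz[OF ntQ] .
  have ODnz: "OD q a \<noteq> 0" for a using OD_nz[OF nt] .
  have q1: "q - 1 \<noteq> 0"
  proof
    assume "q - 1 = 0"
    then have "q ^ 1 = 1" by simp
    then show False using nt[rule_format, of 1] by simp
  qed
  define T where "T = (\<lambda>i. skew_e q i * gauss_g q (n - 2 * i) n *
            (\<Prod>j\<in>{int k - int i + 1 .. int ((n - 2 * i) div 2)}.
               (q powi (2 * j) - 1) / (q powi (2 * j - 2 * int k + 2 * int i) - 1)))"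
  define C where "C = PP Q m / ((q - 1) * PP Q k * PP Q (m - k))"
  have L0: "(\<Sum>i=1..n div 2. skew_e q i * gauss_g q (n - 2 * i) n *
            (\<Prod>j\<in>{int k - int i + 1 .. int ((n - 2 * i) div 2)}.
               (q powi (2 * j) - 1) / (q powi (2 * j - 2 * int k + 2 * int i) - 1)))
        = (\<Sum>i=1..m. T i)" unfolding T_def m_def by (rule refl)
  have L1: "(\<Sum>i=1..m. T i) = (\<Sum>i=1..k. T i)"
  proof (rule sum.mono_neutral_right)
    show "finite {1..m}" by simp
    show "{1..k} \<subseteq> {1..m}" using km by auto
    show "\<forall>i\<in>{1..m} - {1..k}. T i = 0"
    proof
      fix i assume i: "i \<in> {1..m} - {1..k}"
      then have ik: "k < i" "i \<le> m" by auto
      have z: "(0::int) \<in> {int k - int i + 1 .. int ((n - 2 * i) div 2)}" using ik by simp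
      have "(\<Prod>j\<in>{int k - int i + 1 .. int ((n - 2 * i) div 2)}.
               (q powi (2 * j) - 1) / (q powi (2 * j - 2 * int k + 2 * int i) - 1)) = 0"
        by (rule prod_zero) (simp, rule bexI[of _ 0], simp, rule z)
      then show "T i = 0" unfolding T_def by simp
    qed
  qed
  have Ti: "T i = C * (qbin Q k i * (\<Prod>l<i. (x - Q ^ l)))" if i: "1 \<le> i" "i \<le> k" for i
  proof -
    have se: "skew_e q i = q ^ (i * (i - 1)) * OD q i / (q - 1)" by (simp add: skew_e_def OD_def)
    have ge: "gauss_g q (n - 2 * i) n = PP q n / (PP q (n - 2 * i) * PP q (n - (n - 2 * i)))"
      using gauss_PP[OF nt, of "n - 2 * i" n] by simp
    have e1: "n - (n - 2 * i) = 2 * i" using i km n2 by simp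
    have e2: "n - 2 * i = 2 * (m - i)" using n2 by simp
    have pe: "(n - 2 * i) div 2 = m - i" using n2 by simp
    have ip: "(\<Prod>j\<in>{int k - int i + 1 .. int ((n - 2 * i) div 2)}.
               (q powi (2 * j) - 1) / (q powi (2 * j - 2 * int k + 2 * int i) - 1))
         = PP Q (m - i) / (PP Q (k - i) * PP Q (m - k))"
      unfolding pe Q_def using int_prod[OF nt i km] .
    have qb: "qbin Q k i = PP Q k / (PP Q i * PP Q (k - i))"
      using qbin_PP[OF i(2), of Q] PPQnz by (simp add: field_simps)
    have ff: "(\<Prod>l<i. (x - Q ^ l)) = q ^ (i * (i - 1)) * OD q m / OD q (m - i)"
      using ff_OO[of i m q] i km ODnz unfolding x_def Q_def by (simp add: field_simps)
    have T1: "T i = q ^ (i * (i - 1)) * OD q i / (q - 1) *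
       (PP Q m * OD q m / (PP Q (m - i) * OD q (m - i) * (PP Q i * OD q i))) *
       (PP Q (m - i) / (PP Q (k - i) * PP Q (m - k)))"
    proof -
      have ge': "gauss_g q (n - 2 * i) n = PP q n / (PP q (n - 2 * i) * PP q (2 * i))"
        using ge unfolding e1 .
      have p1: "PP q n = PP Q m * OD q m" unfolding n2 Q_def by (rule PP_double)
      have p2: "PP q (n - 2 * i) = PP Q (m - i) * OD q (m - i)" unfolding e2 Q_def by (rule PP_double)
      have p3: "PP q (2 * i) = PP Q i * OD q i" unfolding Q_def by (rule PP_double)
      show ?thesis unfolding T_def ge' p1 p2 p3 se ip by simp
    qed
    show ?thesis unfolding T1 qb ff C_def using PPQnz ODnz q1 by (simp add: field_simps)
  qed
  have newt: "(\<Sum>i=1..k. qbin Q k i * (\<Prod>l<i. (x - Q ^ l))) = x ^ k - 1"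
  proof -
    have "{..k} = insert 0 {1..k}" by auto
    then have "x ^ k = qbin Q k 0 * (\<Prod>l<0. (x - Q ^ l)) + (\<Sum>i=1..k. qbin Q k i * (\<Prod>l<i. (x - Q ^ l)))"
      using qnewton[of x k Q] by simp
    then show ?thesis by simp
  qed
  have R: "(q ^ ((n - 1) * k) - 1) / (q - 1) *
           (\<Prod>j=k+1..n div 2. (q ^ (2 * j) - 1) / (q ^ (2 * j - 2 * k) - 1)) = C * (x ^ k - 1)"
  proof -
    have "q ^ ((n - 1) * k) = x ^ k" unfolding x_def n2 by (rule power_mult)
    moreover have "(\<Prod>j=k+1..n div 2. (q ^ (2 * j) - 1) / (q ^ (2 * j - 2 * k) - 1))
        = PP Q m / (PP Q k * PP Q (m - k))"
      unfolding Q_def m_def[symmetric] using rhs_prod[OF nt, of k m] km by simp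
    ultimately show ?thesis unfolding C_def using q1 PPQnz by (simp add: field_simps)
  qed
  have "(\<Sum>i=1..k. T i) = (\<Sum>i=1..k. C * (qbin Q k i * (\<Prod>l<i. (x - Q ^ l))))"
    by (rule sum.cong) (auto intro: Ti)
  also have "\<dots> = C * (\<Sum>i=1..k. qbin Q k i * (\<Prod>l<i. (x - Q ^ l)))"
    by (rule sum_distrib_left[symmetric])
  also have "\<dots> = C * (x ^ k - 1)" unfolding newt ..
  finally have "(\<Sum>i=1..k. T i) = C * (x ^ k - 1)" .
  then show ?thesis unfolding L0 L1 R .
qed

end
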